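(* Let $x_0\in\mathbb{R}$, $r>0$, and let $F:(x_0-r,x_0+r)\to\mathbb{R}$ be of class $C^3$ with $F(x_0)=x_0$, $F'(x_0)=1$, $F''(x_0)<0$. Then there exists $r_1>0$ such that for every $x_1\in(x_0,x_0+r_1)$ the sequence defined by $x_{n+1}=F(x_n)$ satisfies $|x_n-x_0|\simeq n^{-1}$ as $n\to\infty$, the set $S(x_1)=\{x_n:n\ge1\}$ satisfies $\dim_BS(x_1)=\frac12$, and $S(x_1)$ is Minkowski nondegenerate. Analogously, if instead $F''(x_0)>0$, the same conclusions hold for every $x_1\in(x_0-r_1,x_0)$.
   Context: For sequences of positive reals, $a_n\simeq b_n$ as $n\to\infty$ means there exist constants $0<A\le B$ with $A\le a_n/b_n\le B$ for all $n$. For a bounded set $S\subset\mathbb{R}$ and $\varepsilon>0$, $S_\varepsilon=\{y: \mathrm{dist}(y,S)<\varepsilon\}$ and $|S_\varepsilon|$ is its Lebesgue measure. $\mathcal M^{*s}(S)=\limsup_{\varepsilon\to0}|S_\varepsilon|/\varepsilon^{1-s}$, $\mathcal M_*^{s}(S)=\liminf_{\varepsilon\to0}|S_\varepsilon|/\varepsilon^{1-s}$; $\overline{\dim}_BS=\inf\{s\ge0:\mathcal M^{*s}(S)=0\}$, $\underline{\dim}_BS=\inf\{s\ge0:\mathcal M_*^{s}(S)=0\}$, and $\dim_BS$ is their common value when equal. $S$ is Minkowski nondegenerate if there is $d\ge0$ with $0<\mathcal M_*^d(S)\le\mathcal M^{*d}(S)<\infty$. *)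

theory Defs
  imports "HOL-Analysis.Analysis"
begin

definition C_k_on :: "nat \<Rightarrow> real set \<Rightarrow> (real \<Rightarrow> real) \<Rightarrow> bool" where
  "C_k_on k S F \<longleftrightarrow>
     (\<forall>j<k. \<forall>x\<in>S. (((deriv ^^ j) F) has_real_derivative ((deriv ^^ Suc j) F x)) (at x))
     \<and> continuous_on S ((deriv ^^ k) F)"

definition comparable_seq :: "(nat \<Rightarrow> real) \<Rightarrow> (nat \<Rightarrow> real) \<Rightarrow> bool" where
  "comparable_seq a b \<longleftrightarrow>
     (\<exists>A B. 0 < A \<and> A \<le> B \<and> (\<forall>n\<ge>1. A \<le> a n / b n \<and> a n / b n \<le> B))"

definition eps_nbhd :: "real set \<Rightarrow> real \<Rightarrow> real set" where
  "eps_nbhd S e = {y. infdist y S < e}"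

definition upper_minkowski :: "real \<Rightarrow> real set \<Rightarrow> ereal" where
  "upper_minkowski s S =
     Limsup (at_right 0) (\<lambda>e. ereal (measure lebesgue (eps_nbhd S e) / e powr (1 - s)))"

definition lower_minkowski :: "real \<Rightarrow> real set \<Rightarrow> ereal" where
  "lower_minkowski s S =
     Liminf (at_right 0) (\<lambda>e. ereal (measure lebesgue (eps_nbhd S e) / e powr (1 - s)))"

definition upper_box_dim :: "real set \<Rightarrow> real" where
  "upper_box_dim S = Inf {s. s \<ge> 0 \<and> upper_minkowski s S = 0}"

definition lower_box_dim :: "real set \<Rightarrow> real" where
  "lower_box_dim S = Inf {s. s \<ge> 0 \<and> lower_minkowski s S = 0}"

definition box_dim_eq :: "real set \<Rightarrow> real \<Rightarrow> bool" where
  "box_dim_eq S d \<longleftrightarrow> upper_box_dim S = d \<and> lower_box_dim S = d"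

definition minkowski_nondegenerate :: "real set \<Rightarrow> bool" where
  "minkowski_nondegenerate S \<longleftrightarrow>
     (\<exists>d\<ge>0. 0 < lower_minkowski d S \<and> lower_minkowski d S \<le> upper_minkowski d S
            \<and> upper_minkowski d S < \<infinity>)"

end

theory Submission
  imports Defs
begin


lemma dim_from_bounds:
  fixes S :: "real set"
  assumes C1: "C1 > 0" and e0: "e0 > 0"
    and bnd: "\<And>e. 0 < e \<Longrightarrow> e < e0 \<Longrightarrow> C1 * sqrt e \<le> measure lebesgue (eps_nbhd S e) \<and> measure lebesgue (eps_nbhd S e) \<le> C2 * sqrt e"
  shows "box_dim_eq S (1/2) \<and> minkowski_nondegenerate S"
proof -
  define m where "m e = measure lebesgue (eps_nbhd S e)" for e
  let ?F = "at_right (0::real)"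
  have ntriv: "\<not> trivial_limit ?F" by simp
  have ev: "eventually (\<lambda>e. 0 < e \<and> e < min e0 1) ?F"
    unfolding eventually_at_right_field using e0 by (intro exI[of _ "min e0 1"]) auto
  have ratio: "m e / e powr (1 - s) = (m e / sqrt e) * e powr (s - 1/2)" if "e > 0" for e s
  proof -
    have "e powr (s - 1/2) * e powr (1-s) = sqrt e"
      using that by (simp add: powr_add[symmetric] powr_half_sqrt)
    moreover have "e powr (s - 1/2) > 0" "e powr (1-s) > 0" using that by auto
    ultimately show ?thesis using that
      by (metis (no_types, lifting) divide_divide_eq_right nonzero_mult_div_cancel_left order_less_irrefl times_divide_eq_left)
  qed
  have qb: "C1 \<le> m e / sqrt e \<and> m e / sqrt e \<le> C2" if "0 < e \<and> e < min e0 1" for e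
    using bnd[of e] that by (auto simp: m_def field_simps)
  have big: "upper_minkowski s S = 0 \<and> lower_minkowski s S = 0" if "s > 1/2" for s
  proof -
    have ev0: "eventually (\<lambda>x::real. 0 \<le> x) ?F"
      using eventually_at_right_less[of "0::real"] by (auto elim: eventually_mono)
    have "((\<lambda>e. e powr (s - 1/2)) \<longlongrightarrow> 0) ?F"
      using that ev0 by (intro tendsto_zero_powrI[where b="s - 1/2"] tendsto_ident_at tendsto_const) auto
    then have t2: "((\<lambda>e. C2 * e powr (s - 1/2)) \<longlongrightarrow> 0) ?F"
      using tendsto_mult_right_zero by blast
    have "((\<lambda>e. m e / e powr (1 - s)) \<longlongrightarrow> 0) ?F"
    proof (rule tendsto_sandwich[OF _ _ tendsto_const t2])
      show "eventually (\<lambda>e. 0 \<le> m e / e powr (1 - s)) ?F"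
        using ev by eventually_elim (simp add: m_def)
      show "eventually (\<lambda>e. m e / e powr (1 - s) \<le> C2 * e powr (s - 1/2)) ?F"
        using ev
      proof eventually_elim
        case (elim e)
        have "(m e / sqrt e) * e powr (s - 1/2) \<le> C2 * e powr (s - 1/2)"
          using qb[of e] elim by (intro mult_right_mono) auto
        then show ?case using ratio[of e s] elim by simp
      qed
    qed
    then have L: "((\<lambda>e. ereal (m e / e powr (1 - s))) \<longlongrightarrow> ereal 0) ?F"
      by (rule tendsto_ereal)
    show ?thesis
      unfolding upper_minkowski_def lower_minkowski_def m_def[symmetric] zero_ereal_def
      using lim_imp_Limsup[OF ntriv L] lim_imp_Liminf[OF ntriv L] by blast
  qed
  have small: "ereal C1 \<le> lower_minkowski s S \<and> lower_minkowski s S \<le> upper_minkowski s S" if "s \<le> 1/2" for s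
  proof -
    have "eventually (\<lambda>e. ereal C1 \<le> ereal (m e / e powr (1 - s))) ?F"
      using ev
    proof eventually_elim
      case (elim e)
      have "e powr (1/2 - s) \<le> 1" using elim that by (intro powr_le1) auto
      moreover have "e powr (1/2 - s) > 0" using elim by simp
      moreover have "e powr (s - 1/2) = 1 / e powr (1/2 - s)"
        using powr_minus_divide[of e "1/2 - s"] by simp
      ultimately have P1: "1 \<le> e powr (s - 1/2)" by simp
      have "m e / sqrt e * 1 \<le> (m e / sqrt e) * e powr (s - 1/2)"
        using qb[OF elim] C1 P1 by (intro mult_left_mono) auto
      then have "C1 \<le> (m e / sqrt e) * e powr (s - 1/2)"
        using qb[OF elim] by linarith
      then show ?case using ratio[of e s] elim by simp
    qed
    then have "ereal C1 \<le> lower_minkowski s S"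
      unfolding lower_minkowski_def m_def[symmetric] by (rule Liminf_bounded)
    then show ?thesis unfolding lower_minkowski_def upper_minkowski_def
      using Liminf_le_Limsup[OF ntriv] by auto
  qed
  have half_up: "upper_minkowski (1/2) S \<le> ereal C2"
  proof -
    have "eventually (\<lambda>e. ereal (m e / e powr (1 - 1/2)) \<le> ereal C2) ?F"
      using ev
    proof eventually_elim
      case (elim e)
      then show ?case using qb[OF elim] by (simp add: powr_half_sqrt)
    qed
    then show ?thesis unfolding upper_minkowski_def m_def[symmetric] by (rule Limsup_bounded)
  qed
  have setU: "{s. s \<ge> 0 \<and> upper_minkowski s S = 0} = {1/2<..}"
  proof -
    have "upper_minkowski s S \<noteq> 0" if "s \<le> 1/2" for s
    proof -
      have "(0::ereal) < ereal C1" using C1 by simp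
      also have "\<dots> \<le> upper_minkowski s S" using small[OF that] by (meson order.trans)
      finally show ?thesis by simp
    qed
    then show ?thesis using big by force
  qed
  have setL: "{s. s \<ge> 0 \<and> lower_minkowski s S = 0} = {1/2<..}"
  proof -
    have "lower_minkowski s S \<noteq> 0" if "s \<le> 1/2" for s
    proof -
      have "(0::ereal) < ereal C1" using C1 by simp
      also have "\<dots> \<le> lower_minkowski s S" using small[OF that] by simp
      finally show ?thesis by simp
    qed
    then show ?thesis using big by force
  qed
  have "box_dim_eq S (1/2)"
    unfolding box_dim_eq_def upper_box_dim_def lower_box_dim_def setU setL by simp
  moreover have "minkowski_nondegenerate S"
    unfolding minkowski_nondegenerate_def
  proof (intro exI[of _ "1/2"] conjI)
    have "(0::ereal) < ereal C1" using C1 by simp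
    also have "\<dots> \<le> lower_minkowski (1/2) S" using small[of "1/2"] by simp
    finally show "0 < lower_minkowski (1/2) S" .
    show "lower_minkowski (1/2) S \<le> upper_minkowski (1/2) S" using small[of "1/2"] by simp
    have "ereal C2 < \<infinity>" by simp
    with half_up show "upper_minkowski (1/2) S < \<infinity>" by (rule le_less_trans)
  qed simp
  ultimately show ?thesis ..
qed


lemma seq_asym:
  fixes y :: "nat \<Rightarrow> real"
  assumes c1: "c1 > 0" and c2: "c2 > 0"
    and pos: "\<And>n. n \<ge> 1 \<Longrightarrow> 0 < y n"
    and rec: "\<And>n. n \<ge> 1 \<Longrightarrow> c1 * (y n)^2 \<le> y n - y (Suc n) \<and> y n - y (Suc n) \<le> c2 * (y n)^2"
    and small: "\<And>n. n \<ge> 1 \<Longrightarrow> c2 * y n \<le> 1/2"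
  shows "\<exists>A B. 0 < A \<and> A \<le> B \<and> (\<forall>n\<ge>1. A / real n \<le> y n \<and> y n \<le> B / real n)"
proof -
  define u where "u n = 1 / y n" for n
  have step: "c1 \<le> u (Suc n) - u n \<and> u (Suc n) - u n \<le> 2 * c2" if n: "n \<ge> 1" for n
  proof -
    have yn: "y n > 0" and ys: "y (Suc n) > 0" using pos n by auto
    have r: "c1 * (y n)^2 \<le> y n - y (Suc n)" "y n - y (Suc n) \<le> c2 * (y n)^2" using rec[OF n] by auto
    have le: "y (Suc n) \<le> y n" using r(1) c1 yn by (smt (verit) mult_nonneg_nonneg zero_le_power2)
    have half: "y n / 2 \<le> y (Suc n)"
    proof -
      have "c2 * (y n)^2 = (c2 * y n) * y n" by (simp add: power2_eq_square)
      also have "\<dots> \<le> 1/2 * y n" using small[OF n] yn by (intro mult_right_mono) auto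
      finally show ?thesis using r(2) by simp
    qed
    have eq: "u (Suc n) - u n = (y n - y (Suc n)) / (y n * y (Suc n))"
      using yn ys by (simp add: u_def field_simps)
    have "c1 = c1 * (y n)^2 / (y n * y n)" using yn by (simp add: power2_eq_square)
    also have "\<dots> \<le> (y n - y (Suc n)) / (y n * y n)"
      using r(1) yn by (intro divide_right_mono) auto
    also have "\<dots> \<le> (y n - y (Suc n)) / (y n * y (Suc n))"
      using yn ys le r(1) c1 by (intro divide_left_mono mult_left_mono) (auto intro: order_trans[OF _ r(1)])
    finally have lo: "c1 \<le> u (Suc n) - u n" using eq by simp
    have "(y n - y (Suc n)) / (y n * y (Suc n)) \<le> c2 * (y n)^2 / (y n * y (Suc n))"
      using r(2) yn ys by (intro divide_right_mono) auto
    also have "\<dots> \<le> c2 * (y n)^2 / (y n * (y n / 2))"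
      using yn ys half c2 by (intro divide_left_mono mult_left_mono) auto
    also have "\<dots> = 2 * c2" using yn by (simp add: power2_eq_square field_simps)
    finally have hi: "u (Suc n) - u n \<le> 2 * c2" using eq by simp
    show ?thesis using lo hi by simp
  qed
  have bnd: "u 1 + c1 * real m \<le> u (Suc m) \<and> u (Suc m) \<le> u 1 + 2 * c2 * real m" for m
  proof (induction m)
    case 0 then show ?case by simp
  next
    case (Suc m)
    then show ?case using step[of "Suc m"] by (simp add: algebra_simps)
  qed
  have u1: "u 1 > 0" using pos[of 1] by (simp add: u_def)
  define A where "A = 1 / (u 1 + 2 * c2)"
  define B where "B = 1 / min c1 (u 1)"
  have "\<forall>n\<ge>1. A / real n \<le> y n \<and> y n \<le> B / real n"
  proof (intro allI impI)
    fix n :: nat assume n: "n \<ge> 1"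
    then obtain m where m: "n = Suc m" by (cases n) auto
    have yn: "y n > 0" using pos n by auto
    have un: "u n = 1 / y n" by (simp add: u_def)
    have up: "u n \<le> (u 1 + 2 * c2) * real n"
    proof -
      have a: "0 \<le> real m * u 1" using u1 by simp
      have "u n \<le> u 1 + 2 * c2 * real m" using bnd[of m] m by simp
      also have "\<dots> \<le> (u 1 + 2 * c2) * real n" using a c2 m by (simp add: algebra_simps)
      finally show ?thesis .
    qed
    have lo: "min c1 (u 1) * real n \<le> u n"
    proof -
      have "min c1 (u 1) * real n = min c1 (u 1) + min c1 (u 1) * real m" using m by (simp add: algebra_simps)
      also have "\<dots> \<le> u 1 + c1 * real m" by (intro add_mono mult_right_mono) auto
      finally show ?thesis using bnd[of m] m by simp
    qed
    have pn: "real n > 0" using n by simp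
    have mp: "min c1 (u 1) > 0" using c1 u1 by simp
    show "A / real n \<le> y n \<and> y n \<le> B / real n"
    proof
      have unp: "u n > 0" using yn un by simp
      have "A / real n = 1 / ((u 1 + 2 * c2) * real n)" unfolding A_def by simp
      also have "\<dots> \<le> 1 / u n" using up unp by (intro divide_left_mono) auto
      finally show "A / real n \<le> y n" using yn un by simp
      have "y n = 1 / u n" using yn un by simp
      also have "\<dots> \<le> 1 / (min c1 (u 1) * real n)" using lo mp pn unp by (intro divide_left_mono) auto
      also have "\<dots> = B / real n" unfolding B_def by simp
      finally show "y n \<le> B / real n" .
    qed
  qed
  moreover have "0 < A" using u1 c2 by (simp add: A_def)
  moreover have "A \<le> B" using u1 c2 c1 unfolding A_def B_def
    by (intro divide_left_mono) auto
  ultimately show ?thesis by blast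
qed


lemma infdist_lessD:
  fixes S :: "real set"
  assumes "infdist z S < e" "S \<noteq> {}"
  shows "\<exists>s\<in>S. dist z s < e"
proof -
  have "(INF a\<in>S. dist z a) < e" using assms by (simp add: infdist_notempty)
  then show ?thesis using cInf_lessD[of "(\<lambda>a. dist z a) ` S" e] assms(2) by auto
qed

lemma eps_nbhd_sets: "eps_nbhd S e \<in> sets lebesgue"
proof -
  have "open (eps_nbhd S e)" unfolding eps_nbhd_def by (intro open_Collect_less continuous_intros)
  then show ?thesis by (simp add: borel_open)
qed

lemma meas_bounds:
  fixes y :: "nat \<Rightarrow> real" and x0 A B D :: real
  assumes A: "A > 0" and D: "D > 0"
    and pos: "\<And>n. n \<ge> 1 \<Longrightarrow> 0 < y n"
    and mono: "\<And>n. n \<ge> 1 \<Longrightarrow> y (Suc n) \<le> y n"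
    and lo: "\<And>n. n \<ge> 1 \<Longrightarrow> A / real n \<le> y n"
    and hi: "\<And>n. n \<ge> 1 \<Longrightarrow> y n \<le> B / real n"
    and gap: "\<And>n. n \<ge> 1 \<Longrightarrow> y n - y (Suc n) \<le> D / (real n)^2"
    and e: "0 < e" "e < min 1 D"
  shows "A / (3 * sqrt D) * sqrt e \<le> measure lebesgue (eps_nbhd {x0 + y n |n. n \<ge> 1} e)
       \<and> measure lebesgue (eps_nbhd {x0 + y n |n. n \<ge> 1} e) \<le> (B + 4) * sqrt e"
proof -
  define S where "S = {x0 + y n |n. n \<ge> 1}"
  define E where "E = eps_nbhd S e"
  have Sne: "S \<noteq> {}" unfolding S_def by auto
  have monoG: "y m \<le> y n" if "1 \<le> n" "n \<le> m" for n m
    using that(2,1)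
  proof (induction m rule: dec_induct)
    case base then show ?case by simp
  next
    case (step k) then show ?case using mono[of k] by simp
  qed
  have Esets: "E \<in> sets lebesgue" unfolding E_def by (rule eps_nbhd_sets)
  have ee: "e^2 \<le> e" using e mult_left_mono[of e 1 e] by (simp add: power2_eq_square)
  have se: "sqrt e > 0" "sqrt e \<le> 1" "e \<le> sqrt e" using e real_le_rsqrt[OF ee] by auto
  define N where "N = nat \<lceil>1 / sqrt e\<rceil>"
  have "0 < 1 / sqrt e" using se by simp
  then have c0: "0 \<le> \<lceil>1 / sqrt e\<rceil>" by linarith
  have NN: "real N = of_int \<lceil>1 / sqrt e\<rceil>" unfolding N_def using c0 by simp
  have N1: "real N \<ge> 1 / sqrt e" unfolding NN by linarith
  have N2: "real N \<le> 1 / sqrt e + 1" unfolding NN using of_int_ceiling_le_add_one[of "1 / sqrt e"] by linarith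
  have Npos: "N \<ge> 1" using N1 se
    by (metis One_nat_def divide_pos_pos less_one not_less of_nat_0 zero_less_one order_less_le_trans leI)
  define U where "U = {x0 - e .. x0 + y N + e} \<union> (\<Union>n\<in>{1..<N}. {x0 + y n - e .. x0 + y n + e})"
  have EU: "E \<subseteq> U"
  proof
    fix z assume "z \<in> E"
    then have "infdist z S < e" by (simp add: E_def eps_nbhd_def)
    then obtain s where "s \<in> S" "dist z s < e" using infdist_lessD Sne by blast
    then obtain n where n: "n \<ge> 1" "s = x0 + y n" "\<bar>z - s\<bar> < e" unfolding S_def by (auto simp: dist_real_def)
    show "z \<in> U"
    proof (cases "n < N")
      case True
      then have "n \<in> {1..<N}" "z \<in> {x0 + y n - e .. x0 + y n + e}" using n by auto
      then show ?thesis unfolding U_def by blast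
    next
      case False
      then have "y n \<le> y N" "0 < y n" using monoG[of N n] Npos pos[of n] n by auto
      then show ?thesis using n unfolding U_def by auto
    qed
  qed
  have Ulm: "U \<in> lmeasurable" unfolding U_def by (intro fmeasurable.Un fmeasurable.finite_UN) auto
  have "measure lebesgue E \<le> measure lebesgue U"
    by (rule measure_mono_fmeasurable[OF EU Esets Ulm])
  also have "\<dots> \<le> measure lebesgue {x0 - e .. x0 + y N + e} + measure lebesgue (\<Union>n\<in>{1..<N}. {x0 + y n - e .. x0 + y n + e})"
    unfolding U_def by (intro measure_Un_le) auto
  also have "\<dots> \<le> (y N + 2 * e) + (\<Sum>n\<in>{1..<N}. measure lebesgue {x0 + y n - e .. x0 + y n + e})"
    using pos[OF Npos] e by (intro add_mono measure_UNION_le) auto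
  also have "\<dots> = y N + 2 * e + (real N - 1) * (2 * e)"
    using e Npos by (simp add: of_nat_diff)
  also have "\<dots> = y N + 2 * e * real N" by (simp add: algebra_simps)
  also have "\<dots> \<le> (B + 4) * sqrt e"
  proof -
    have "y N \<le> B / real N" using hi Npos by simp
    also have "\<dots> \<le> B * sqrt e"
    proof -
      have B0: "B \<ge> 0" using hi[OF Npos] pos[OF Npos] Npos
        by (smt (verit) divide_nonpos_pos of_nat_0_less_iff less_le_trans zero_less_one)
      have "B / real N = B * (1 / real N)" by simp
      also have "1 / real N \<le> sqrt e"
      proof -
        have "1 / real N \<le> 1 / (1 / sqrt e)" by (rule divide_left_mono[OF N1]) (use se Npos in auto)
        then show ?thesis by simp
      qed
      then have "B * (1 / real N) \<le> B * sqrt e" using B0 by (intro mult_left_mono)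
      finally show ?thesis by simp
    qed
    finally have a: "y N \<le> B * sqrt e" .
    have "2 * e * real N \<le> 2 * e * (1 / sqrt e + 1)" using N2 e by (intro mult_left_mono) auto
    also have "\<dots> = 2 * sqrt e + 2 * e" using se e
      by (simp add: field_simps)
    also have "\<dots> \<le> 4 * sqrt e" using se by simp
    finally show ?thesis using a by (simp add: algebra_simps)
  qed
  finally have upper: "measure lebesgue E \<le> (B + 4) * sqrt e" .
  define q where "q = sqrt (D / e)"
  have q1: "q \<ge> 1" unfolding q_def using e D by (simp add: real_le_rsqrt)
  define M where "M = nat \<lceil>q\<rceil> + 1"
  have MM: "real M = of_int \<lceil>q\<rceil> + 1" unfolding M_def using q1 by simp
  have M1: "real M > q" "real M \<le> q + 2" unfolding MM using of_int_ceiling_le_add_one[of q] by linarith+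
  have Mpos: "M \<ge> 1" unfolding M_def by simp
  have gM: "D / (real M)^2 < e"
  proof -
    have "q^2 = D / e" unfolding q_def using e D by simp
    moreover have "q^2 < (real M)^2" using M1 q1 by (intro power_strict_mono) auto
    moreover have "e * q^2 < e * (real M)^2" using e \<open>q^2 < (real M)^2\<close> by (intro mult_strict_left_mono) auto
    ultimately have "D < e * (real M)^2" using e by (simp add: field_simps)
    then show ?thesis using Mpos by (simp add: field_simps)
  qed
  have sub: "{x0 <.. x0 + y M} \<subseteq> E"
  proof
    fix z assume z: "z \<in> {x0 <.. x0 + y M}"
    define w where "w = z - x0"
    have w: "0 < w" "w \<le> y M" using z by (auto simp: w_def)
    define n0 where "n0 = max M (nat \<lceil>B / w\<rceil>)"
    have "y (Suc n0) \<le> B / real (Suc n0)" by (rule hi) simp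
    also have "\<dots> < w"
    proof -
      have "B / w < real (Suc n0)" unfolding n0_def by linarith
      then show ?thesis using w by (simp add: field_simps)
    qed
    finally have ex: "\<exists>n. M \<le> n \<and> y (Suc n) < w" by (intro exI[of _ n0]) (simp add: n0_def)
    define k where "k = (LEAST n. M \<le> n \<and> y (Suc n) < w)"
    have k: "M \<le> k" "y (Suc k) < w" using LeastI_ex[OF ex] by (auto simp: k_def)
    have yk: "w \<le> y k"
    proof (cases "k = M")
      case True then show ?thesis using w by simp
    next
      case False
      then obtain j where j: "k = Suc j" "M \<le> j" using k(1) by (cases k) auto
      have "j < k" using j by simp
      then have "\<not> (M \<le> j \<and> y (Suc j) < w)" unfolding k_def by (rule not_less_Least)
      then show ?thesis using j by simp
    qed
    have kpos: "k \<ge> 1" using k Mpos by simp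
    have "y k - y (Suc k) \<le> D / (real k)^2" by (rule gap[OF kpos])
    also have "\<dots> \<le> D / (real M)^2" using D k Mpos
      by (intro divide_left_mono power_mono mult_pos_pos) auto
    also have "\<dots> < e" by (rule gM)
    finally have "dist z (x0 + y k) < e" using yk k(2) by (simp add: dist_real_def w_def)
    moreover have "x0 + y k \<in> S" using kpos unfolding S_def by auto
    ultimately have "infdist z S < e" using infdist_le[of "x0 + y k" S z] by linarith
    then show "z \<in> E" by (simp add: E_def eps_nbhd_def)
  qed
  have Elm: "E \<in> lmeasurable"
    by (rule fmeasurableI2[OF Ulm EU Esets])
  have "A / (3 * sqrt D) * sqrt e \<le> A / real M"
  proof -
    have "real M \<le> 3 * q" using M1 q1 by simp
    also have "q = sqrt D / sqrt e" unfolding q_def by (simp add: real_sqrt_divide)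
    finally have "real M * sqrt e \<le> 3 * sqrt D" using se by (simp add: field_simps)
    then show ?thesis using A D se Mpos by (simp add: field_simps)
  qed
  also have "\<dots> \<le> y M" using lo Mpos by simp
  also have "\<dots> = measure lebesgue {x0 <.. x0 + y M}" using pos[OF Mpos] by simp
  also have "\<dots> \<le> measure lebesgue E" by (rule measure_mono_fmeasurable[OF sub _ Elm]) simp
  finally show ?thesis using upper unfolding E_def S_def by simp
qed


lemma reflect_measure:
  fixes x0 :: real and y :: "nat \<Rightarrow> real"
  shows "measure lebesgue (eps_nbhd {x0 - y n |n. n \<ge> 1} e) = measure lebesgue (eps_nbhd {x0 + y n |n. n \<ge> 1} e)"
proof -
  define f where "f t = (-1) *\<^sub>R t + 2 * x0" for t :: real
  define S where "S = {x0 + y n |n. n \<ge> 1}"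
  have ff: "f (f t) = t" for t by (simp add: f_def)
  have "f ` S = {f (x0 + y n) |n. n \<ge> 1}" unfolding S_def by blast
  then have fS: "f ` S = {x0 - y n |n. n \<ge> 1}" by (simp add: f_def)
  have dist_f: "dist (f a) (f b) = dist a b" for a b by (simp add: f_def dist_real_def abs_minus_commute)
  have inf: "infdist (f z) (f ` S) = infdist z S" for z
    unfolding infdist_def by (simp add: image_image dist_f)
  have "eps_nbhd (f ` S) e = f ` eps_nbhd S e"
  proof (intro set_eqI iffI)
    fix z assume "z \<in> eps_nbhd (f ` S) e"
    then have "infdist (f (f z)) (f ` S) < e" using ff by (simp add: eps_nbhd_def)
    then have "f z \<in> eps_nbhd S e" by (simp add: inf eps_nbhd_def)
    then show "z \<in> f ` eps_nbhd S e" using ff by (metis image_eqI)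
  next
    fix z assume "z \<in> f ` eps_nbhd S e"
    then show "z \<in> eps_nbhd (f ` S) e" by (auto simp: eps_nbhd_def inf)
  qed
  then have "measure lebesgue (eps_nbhd (f ` S) e) = measure lebesgue (eps_nbhd S e)"
    using measure_lebesgue_affine[of "-1" "2 * x0" "eps_nbhd S e"] by (simp add: f_def)
  then show ?thesis using fS S_def by simp
qed

lemma local_taylor:
  fixes F :: "real \<Rightarrow> real"
  assumes r: "r > 0" and C: "C_k_on 3 {x0 - r<..<x0 + r} F" and F0: "F x0 = x0" and F1: "deriv F x0 = 1"
    and q: "deriv (deriv F) x0 \<noteq> 0"
  shows "\<exists>\<delta>>0. \<forall>x. 0 < \<bar>x - x0\<bar> \<and> \<bar>x - x0\<bar> < \<delta> \<longrightarrow> (\<exists>t. \<bar>deriv (deriv F) t - deriv (deriv F) x0\<bar> < \<bar>deriv (deriv F) x0\<bar> / 2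
           \<and> F x = x + deriv (deriv F) t / 2 * (x - x0)^2)"
proof -
  let ?I = "{x0 - r<..<x0 + r}"
  have D: "\<And>j x. j < 3 \<Longrightarrow> x \<in> ?I \<Longrightarrow> (((deriv ^^ j) F) has_real_derivative ((deriv ^^ Suc j) F x)) (at x)"
    using C unfolding C_k_on_def by blast
  have d2: "(deriv ^^ 2) F = deriv (deriv F)" by (simp add: numeral_2_eq_2)
  have "isCont ((deriv ^^ 2) F) x0" using D[of 2 x0] r by (intro DERIV_isCont) auto
  then have "isCont (deriv (deriv F)) x0" using d2 by simp
  moreover have "\<bar>deriv (deriv F) x0\<bar> / 2 > 0" using q by simp
  ultimately obtain d where d: "d > 0" "\<And>t. dist t x0 < d \<Longrightarrow> dist (deriv (deriv F) t) (deriv (deriv F) x0) < \<bar>deriv (deriv F) x0\<bar> / 2"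
    unfolding continuous_at_eps_delta by metis
  show ?thesis
  proof (rule exI[of _ "min d r"], intro conjI allI impI)
    show "min d r > 0" using d r by simp
    fix x assume x: "0 < \<bar>x - x0\<bar> \<and> \<bar>x - x0\<bar> < min d r"
    have "\<exists>t. (if x < x0 then x < t \<and> t < x0 else x0 < t \<and> t < x) \<and>
      F x = (\<Sum>m<2. ((deriv ^^ m) F x0 / fact m) * (x - x0)^m) + ((deriv ^^ 2) F t / fact 2) * (x - x0)^2"
    proof (rule Taylor[where a = "min x x0" and b = "max x x0"])
      show "\<forall>m t. m < 2 \<and> min x x0 \<le> t \<and> t \<le> max x x0 \<longrightarrow> DERIV ((deriv ^^ m) F) t :> (deriv ^^ Suc m) F t"
      proof (intro allI impI)
        fix m :: nat and t assume mt: "m < 2 \<and> min x x0 \<le> t \<and> t \<le> max x x0"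
        then have "t \<in> ?I" "m < 3" using x by auto
        then show "DERIV ((deriv ^^ m) F) t :> (deriv ^^ Suc m) F t" using D by blast
      qed
    qed (use x in auto)
    then obtain t where t: "(if x < x0 then x < t \<and> t < x0 else x0 < t \<and> t < x)"
      and Fx: "F x = (\<Sum>m<2. ((deriv ^^ m) F x0 / fact m) * (x - x0)^m) + ((deriv ^^ 2) F t / fact 2) * (x - x0)^2"
      by blast
    have "\<bar>t - x0\<bar> < d" using t x by (auto split: if_splits)
    then have "\<bar>deriv (deriv F) t - deriv (deriv F) x0\<bar> < \<bar>deriv (deriv F) x0\<bar> / 2"
      using d(2)[of t] by (simp add: dist_real_def)
    moreover have "F x = x + deriv (deriv F) t / 2 * (x - x0)^2"
      using Fx F0 F1 d2 by (simp add: numeral_2_eq_2 lessThan_Suc)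
    ultimately show "\<exists>t. \<bar>deriv (deriv F) t - deriv (deriv F) x0\<bar> < \<bar>deriv (deriv F) x0\<bar> / 2
           \<and> F x = x + deriv (deriv F) t / 2 * (x - x0)^2" by blast
  qed
qed

lemma dyn:
  fixes F :: "real \<Rightarrow> real" and x0 r s :: real
  assumes s: "s = 1 \<or> s = -1" and r: "r > 0" and C: "C_k_on 3 {x0 - r<..<x0 + r} F"
    and F0: "F x0 = x0" and F1: "deriv F x0 = 1" and sg: "s * deriv (deriv F) x0 < 0"
  shows "\<exists>r1>0. \<forall>x1. 0 < s * (x1 - x0) \<and> s * (x1 - x0) < r1 \<longrightarrow> (\<forall>x :: nat \<Rightarrow> real.
              x 1 = x1 \<and> (\<forall>n\<ge>1. x (Suc n) = F (x n)) \<longrightarrow>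
              comparable_seq (\<lambda>n. \<bar>x n - x0\<bar>) (\<lambda>n. 1 / real n)
              \<and> (\<exists>C1 C2 e0. C1 > 0 \<and> e0 > 0 \<and> (\<forall>e. 0 < e \<and> e < e0 \<longrightarrow>
                   C1 * sqrt e \<le> measure lebesgue (eps_nbhd {x n | n. n \<ge> 1} e) \<and>
                   measure lebesgue (eps_nbhd {x n | n. n \<ge> 1} e) \<le> C2 * sqrt e)))"
proof -
  define q where "q = deriv (deriv F)"
  define a where "a = \<bar>q x0\<bar>"
  have s2: "s * s = 1" "\<bar>s\<bar> = 1" using s by auto
  have sq: "s * q x0 = - a" using sg s unfolding a_def q_def by auto
  have a: "a > 0" using sq sg q_def by simp
  have "q x0 \<noteq> 0" using a a_def by simp
  then obtain \<delta> where \<delta>: "\<delta> > 0" and T: "\<And>x. 0 < \<bar>x - x0\<bar> \<and> \<bar>x - x0\<bar> < \<delta> \<Longrightarrow> (\<exists>t. \<bar>q t - q x0\<bar> < a / 2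
           \<and> F x = x + q t / 2 * (x - x0)^2)"
    using local_taylor[OF r C F0 F1] unfolding q_def a_def by blast
  define r1 where "r1 = min \<delta> (2 / (3 * a))"
  have r1: "r1 > 0" using \<delta> a by (simp add: r1_def)
  have stepF: "a/4 * h^2 \<le> h - s * (F x - x0) \<and> h - s * (F x - x0) \<le> 3*a/4 * h^2"
    if h: "h = s * (x - x0)" "0 < h" "h < r1" for x h
  proof -
    have ax: "\<bar>x - x0\<bar> = h" using h s by auto
    obtain t where t: "\<bar>q t - q x0\<bar> < a / 2" and Fx: "F x = x + q t / 2 * (x - x0)^2"
      using T[of x] ax h r1_def by auto
    have "\<bar>s * q t - s * q x0\<bar> < a / 2" using t s2 by (metis abs_mult mult.left_neutral right_diff_distrib)
    then have "s * q t - s * q x0 < a/2 \<and> - (s * q t - s * q x0) < a/2" by (rule abs_less_iff[THEN iffD1])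
    then have st: "- 3 * a / 2 < s * q t" "s * q t < - a / 2" using sq by linarith+
    have sq2: "(x - x0)^2 = h^2" using ax by (metis power2_abs)
    have e1: "F x - x0 = (x - x0) + q t / 2 * h^2" using Fx sq2 by simp
    have "s * (F x - x0) = s * (x - x0) + (s * q t) / 2 * h^2" unfolding e1 by (simp add: algebra_simps)
    then have "s * (F x - x0) = h + (s * q t) / 2 * h^2" using h(1) by simp
    then have "h - s * (F x - x0) = - (s * q t) / 2 * h^2" by simp
    moreover have "a/4 * h^2 \<le> - (s * q t) / 2 * h^2" using st by (intro mult_right_mono) auto
    moreover have "- (s * q t) / 2 * h^2 \<le> 3*a/4 * h^2" using st by (intro mult_right_mono) auto
    ultimately show ?thesis by simp
  qed
  show ?thesis
  proof (rule exI[of _ r1], rule conjI[OF r1], intro allI impI)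
    fix x1 :: real and x :: "nat \<Rightarrow> real"
    assume x1: "0 < s * (x1 - x0) \<and> s * (x1 - x0) < r1"
      and xs: "x 1 = x1 \<and> (\<forall>n\<ge>1. x (Suc n) = F (x n))"
    define y where "y n = s * (x n - x0)" for n
    have c1: "a/4 > 0" and c2: "3*a/4 > 0" using a by auto
    have inv: "0 < y n \<and> y n < r1" if "n \<ge> 1" for n
      using that
    proof (induction n rule: dec_induct)
      case base then show ?case using x1 xs by (simp add: y_def)
    next
      case (step n)
      have st: "a/4 * (y n)^2 \<le> y n - y (Suc n) \<and> y n - y (Suc n) \<le> 3*a/4 * (y n)^2"
        using stepF[of "y n" "x n"] step.IH xs step.hyps by (simp add: y_def)
      have "3*a/4 * (y n)^2 = (3*a/4 * y n) * y n" by (simp add: power2_eq_square)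
      also have "\<dots> < 1 * y n"
      proof (intro mult_strict_right_mono)
        have "3*a/4 * y n < 3*a/4 * (2 / (3 * a))" using step.IH c2 r1_def
          by (intro mult_strict_left_mono) auto
        also have "\<dots> = 1/2" using a by simp
        finally show "3*a/4 * y n < 1" by simp
      qed (use step.IH in auto)
      finally have "0 < y (Suc n)" using st by simp
      moreover have "y (Suc n) \<le> y n" using st c1 by (smt (verit) mult_nonneg_nonneg zero_le_power2)
      ultimately show ?case using step.IH by simp
    qed
    have rec: "a/4 * (y n)^2 \<le> y n - y (Suc n) \<and> y n - y (Suc n) \<le> 3*a/4 * (y n)^2" if "n \<ge> 1" for n
      using stepF[of "y n" "x n"] inv[OF that] xs that by (simp add: y_def)
    have small: "3*a/4 * y n \<le> 1/2" if "n \<ge> 1" for n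
    proof -
      have "3*a/4 * y n \<le> 3*a/4 * (2 / (3 * a))" using inv[OF that] c2 r1_def
        by (intro mult_left_mono) auto
      also have "\<dots> = 1/2" using a by simp
      finally show ?thesis .
    qed
    obtain A B where AB: "0 < A" "A \<le> B" "\<forall>n\<ge>1. A / real n \<le> y n \<and> y n \<le> B / real n"
      using seq_asym[of "a/4" "3*a/4" y] c1 c2 rec small inv by blast
    have absx: "\<bar>x n - x0\<bar> = y n" if "n \<ge> 1" for n
      using inv[OF that] s2 unfolding y_def by (metis abs_mult abs_of_pos mult_1)
    have comp: "comparable_seq (\<lambda>n. \<bar>x n - x0\<bar>) (\<lambda>n. 1 / real n)"
    proof -
      have "\<forall>n\<ge>1. A \<le> \<bar>x n - x0\<bar> / (1 / real n) \<and> \<bar>x n - x0\<bar> / (1 / real n) \<le> B"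
      proof (intro allI impI)
      fix n :: nat assume n: "n \<ge> 1"
      have eq2: "\<bar>x n - x0\<bar> / (1 / real n) = real n * y n" unfolding absx[OF n] by simp
      have "A \<le> real n * y n" "real n * y n \<le> B" using AB(3) n by (auto simp: field_simps)
      then show "A \<le> \<bar>x n - x0\<bar> / (1 / real n) \<and> \<bar>x n - x0\<bar> / (1 / real n) \<le> B"
        unfolding eq2 by simp
      qed
      then show ?thesis unfolding comparable_seq_def using AB(1,2) by blast
    qed
    define D where "D = 3*a/4 * B^2"
    have B0: "B > 0" using AB by simp
    have D: "D > 0" using a B0 by (simp add: D_def)
    have gap: "y n - y (Suc n) \<le> D / (real n)^2" if n: "n \<ge> 1" for n
    proof -
      have "y n - y (Suc n) \<le> 3*a/4 * (y n)^2" using rec[OF n] by simp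
      also have "\<dots> \<le> 3*a/4 * (B / real n)^2"
        using AB(3) n inv[OF n] c2 by (intro mult_left_mono power_mono) auto
      also have "\<dots> = D / (real n)^2" by (simp add: D_def power_divide)
      finally show ?thesis .
    qed
    have monoy: "y (Suc n) \<le> y n" if "n \<ge> 1" for n
      using rec[OF that] c1 by (smt (verit) mult_nonneg_nonneg zero_le_power2)
    have MB: "A / (3 * sqrt D) * sqrt e \<le> measure lebesgue (eps_nbhd {x0 + y n |n. n \<ge> 1} e)
       \<and> measure lebesgue (eps_nbhd {x0 + y n |n. n \<ge> 1} e) \<le> (B + 4) * sqrt e"
      if "0 < e" "e < min 1 D" for e
      using meas_bounds[of A D y B e x0] AB D inv monoy gap that by auto
    have setx: "measure lebesgue (eps_nbhd {x n | n. n \<ge> 1} e) = measure lebesgue (eps_nbhd {x0 + y n |n. n \<ge> 1} e)" for e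
    proof (cases "s = 1")
      case True
      then have "{x n | n. n \<ge> 1} = {x0 + y n |n. n \<ge> 1}" by (simp add: y_def)
      then show ?thesis by simp
    next
      case False
      then have "s = -1" using s by simp
      then have "{x n | n. n \<ge> 1} = {x0 - y n |n. n \<ge> 1}" by (simp add: y_def)
      then show ?thesis using reflect_measure[of x0 y e] by simp
    qed
    show "comparable_seq (\<lambda>n. \<bar>x n - x0\<bar>) (\<lambda>n. 1 / real n)
              \<and> (\<exists>C1 C2 e0. C1 > 0 \<and> e0 > 0 \<and> (\<forall>e. 0 < e \<and> e < e0 \<longrightarrow>
                   C1 * sqrt e \<le> measure lebesgue (eps_nbhd {x n | n. n \<ge> 1} e) \<and>
                   measure lebesgue (eps_nbhd {x n | n. n \<ge> 1} e) \<le> C2 * sqrt e))"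
    proof (intro conjI comp, rule exI[of _ "A / (3 * sqrt D)"], rule exI[of _ "B + 4"], rule exI[of _ "min 1 D"], intro conjI allI impI)
      show "A / (3 * sqrt D) > 0" using AB D by simp
      show "min 1 D > 0" using D by simp
      fix e :: real assume "0 < e \<and> e < min 1 D"
      then show "A / (3 * sqrt D) * sqrt e \<le> measure lebesgue (eps_nbhd {x n | n. n \<ge> 1} e)"
        "measure lebesgue (eps_nbhd {x n | n. n \<ge> 1} e) \<le> (B + 4) * sqrt e"
        using MB[of e] setx[of e] by auto
    qed
  qed
qed

theorem theorem3:
  fixes F :: "real \<Rightarrow> real" and x0 r :: real
  assumes "r > 0"
    and "C_k_on 3 {x0 - r<..<x0 + r} F"
    and "F x0 = x0"
    and "deriv F x0 = 1"
  shows "(deriv (deriv F) x0 < 0 \<longrightarrow>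
           (\<exists>r1>0. \<forall>x1\<in>{x0<..<x0 + r1}. \<forall>x :: nat \<Rightarrow> real.
              x 1 = x1 \<and> (\<forall>n\<ge>1. x (Suc n) = F (x n)) \<longrightarrow>
              comparable_seq (\<lambda>n. \<bar>x n - x0\<bar>) (\<lambda>n. 1 / real n)
              \<and> box_dim_eq {x n | n. n \<ge> 1} (1/2)
              \<and> minkowski_nondegenerate {x n | n. n \<ge> 1}))
       \<and> (deriv (deriv F) x0 > 0 \<longrightarrow>
           (\<exists>r1>0. \<forall>x1\<in>{x0 - r1<..<x0}. \<forall>x :: nat \<Rightarrow> real.
              x 1 = x1 \<and> (\<forall>n\<ge>1. x (Suc n) = F (x n)) \<longrightarrow>
              comparable_seq (\<lambda>n. \<bar>x n - x0\<bar>) (\<lambda>n. 1 / real n)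
              \<and> box_dim_eq {x n | n. n \<ge> 1} (1/2)
              \<and> minkowski_nondegenerate {x n | n. n \<ge> 1}))"
proof -
  have conv: "comparable_seq (\<lambda>n. \<bar>x n - x0\<bar>) (\<lambda>n. 1 / real n)
              \<and> box_dim_eq {x n | n. n \<ge> 1} (1/2)
              \<and> minkowski_nondegenerate {x n | n. n \<ge> 1}"
    if H: "comparable_seq (\<lambda>n. \<bar>x n - x0\<bar>) (\<lambda>n. 1 / real n)
              \<and> (\<exists>C1 C2 e0. C1 > 0 \<and> e0 > 0 \<and> (\<forall>e. 0 < e \<and> e < e0 \<longrightarrow>
                   C1 * sqrt e \<le> measure lebesgue (eps_nbhd {x n | n. n \<ge> 1} e) \<and>
                   measure lebesgue (eps_nbhd {x n | n. n \<ge> 1} e) \<le> C2 * sqrt e))" for x :: "nat \<Rightarrow> real"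
  proof -
    obtain C1 C2 e0 where "C1 > 0" "e0 > 0" "\<forall>e. 0 < e \<and> e < e0 \<longrightarrow>
                   C1 * sqrt e \<le> measure lebesgue (eps_nbhd {x n | n. n \<ge> 1} e) \<and>
                   measure lebesgue (eps_nbhd {x n | n. n \<ge> 1} e) \<le> C2 * sqrt e"
      using H[THEN conjunct2] by blast
    then have "box_dim_eq {x n | n. n \<ge> 1} (1/2) \<and> minkowski_nondegenerate {x n | n. n \<ge> 1}"
      by (intro dim_from_bounds[of C1 e0 _ C2]) auto
    then show ?thesis using H by blast
  qed
  show ?thesis
  proof (intro conjI impI)
    assume neg: "deriv (deriv F) x0 < 0"
    obtain r1 where r1: "r1 > 0" and H: "\<And>x1 x. 0 < 1 * (x1 - x0) \<and> 1 * (x1 - x0) < r1 \<Longrightarrow>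
              x 1 = x1 \<and> (\<forall>n\<ge>1. x (Suc n) = F (x n)) \<Longrightarrow>
              comparable_seq (\<lambda>n. \<bar>x n - x0\<bar>) (\<lambda>n. 1 / real n)
              \<and> (\<exists>C1 C2 e0. C1 > 0 \<and> e0 > 0 \<and> (\<forall>e. 0 < e \<and> e < e0 \<longrightarrow>
                   C1 * sqrt e \<le> measure lebesgue (eps_nbhd {x n | n. n \<ge> 1} e) \<and>
                   measure lebesgue (eps_nbhd {x n | n. n \<ge> 1} e) \<le> C2 * sqrt e))"
      using dyn[of 1, OF _ assms] neg by auto
    show "\<exists>r1>0. \<forall>x1\<in>{x0<..<x0 + r1}. \<forall>x :: nat \<Rightarrow> real.
              x 1 = x1 \<and> (\<forall>n\<ge>1. x (Suc n) = F (x n)) \<longrightarrow>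
              comparable_seq (\<lambda>n. \<bar>x n - x0\<bar>) (\<lambda>n. 1 / real n)
              \<and> box_dim_eq {x n | n. n \<ge> 1} (1/2)
              \<and> minkowski_nondegenerate {x n | n. n \<ge> 1}"
      using r1 H conv by (intro exI[of _ r1]) auto
  next
    assume pos: "deriv (deriv F) x0 > 0"
    obtain r1 where r1: "r1 > 0" and H: "\<And>x1 x. 0 < -1 * (x1 - x0) \<and> -1 * (x1 - x0) < r1 \<Longrightarrow>
              x 1 = x1 \<and> (\<forall>n\<ge>1. x (Suc n) = F (x n)) \<Longrightarrow>
              comparable_seq (\<lambda>n. \<bar>x n - x0\<bar>) (\<lambda>n. 1 / real n)
              \<and> (\<exists>C1 C2 e0. C1 > 0 \<and> e0 > 0 \<and> (\<forall>e. 0 < e \<and> e < e0 \<longrightarrow>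
                   C1 * sqrt e \<le> measure lebesgue (eps_nbhd {x n | n. n \<ge> 1} e) \<and>
                   measure lebesgue (eps_nbhd {x n | n. n \<ge> 1} e) \<le> C2 * sqrt e))"
      using dyn[of "-1", OF _ assms] pos by auto
    show "\<exists>r1>0. \<forall>x1\<in>{x0 - r1<..<x0}. \<forall>x :: nat \<Rightarrow> real.
              x 1 = x1 \<and> (\<forall>n\<ge>1. x (Suc n) = F (x n)) \<longrightarrow>
              comparable_seq (\<lambda>n. \<bar>x n - x0\<bar>) (\<lambda>n. 1 / real n)
              \<and> box_dim_eq {x n | n. n \<ge> 1} (1/2)
              \<and> minkowski_nondegenerate {x n | n. n \<ge> 1}"
      using r1 H conv by (intro exI[of _ r1]) auto
  qed
qed

end
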